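(* Let $v \ge 360$ be an integer. Then \[ \beta(5,v,4) \le \left\lfloor \frac{5v-15}{3} \right\rfloor, \] and \[ \beta(5,v,4) \ge \begin{cases} \frac{5v-27}{3} & \text{if } v \equiv 0 \pmod 3,\\ \frac{5v-32}{3} & \text{if } v \equiv 1 \pmod 3,\\ \frac{5v-22}{3} & \text{if } v \equiv 2 \pmod 3. \end{cases} \]
   Context: For integers $v \ge k \ge 2$, a $(v,k)$-packing is a pair $(X,\mathcal{B})$ where $X$ is a set of $v$ points and $\mathcal{B}$ is a set of $k$-subsets of $X$ (blocks) such that every pair of distinct points lies in at most one block. A partial parallel class (PPC) is a set of pairwise disjoint blocks; its size is the number of blocks. A PPC of size $\rho$ is maximum if the packing has no PPC of size $\rho+1$. $\beta(\rho,v,k)$ denotes the maximum number of blocks in a $(v,k)$-packing in which the maximum PPC has size $\rho$. *)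

theory Defs
  imports Main
begin

definition packing :: "nat \<Rightarrow> nat \<Rightarrow> 'a set \<Rightarrow> 'a set set \<Rightarrow> bool" where
  "packing v k X B \<longleftrightarrow> finite X \<and> card X = v \<and>
     (\<forall>b\<in>B. b \<subseteq> X \<and> card b = k) \<and>
     (\<forall>x\<in>X. \<forall>y\<in>X. x \<noteq> y \<longrightarrow> card {b\<in>B. x \<in> b \<and> y \<in> b} \<le> 1)"

definition is_ppc :: "'a set set \<Rightarrow> 'a set set \<Rightarrow> bool" where
  "is_ppc B P \<longleftrightarrow> P \<subseteq> B \<and> (\<forall>b\<in>P. \<forall>c\<in>P. b \<noteq> c \<longrightarrow> b \<inter> c = {})"

definition max_ppc_size :: "'a set set \<Rightarrow> nat \<Rightarrow> bool" where
  "max_ppc_size B \<rho> \<longleftrightarrow> (\<exists>P. is_ppc B P \<and> card P = \<rho>) \<and>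
     \<not> (\<exists>P. is_ppc B P \<and> card P = \<rho> + 1)"

text \<open>beta(rho,v,k); points taken WLOG to be {0..<v}.\<close>
definition beta :: "nat \<Rightarrow> nat \<Rightarrow> nat \<Rightarrow> nat" where
  "beta \<rho> v k = Max {card B | B. packing v k {..<v} B \<and> max_ppc_size B \<rho>}"

end

theory Submission
  imports Defs
begin


locale pk =
  fixes v :: nat and B :: "nat set set" and P :: "nat set set"
  assumes pack: "packing v 4 {..<v} B"
  and ppc: "is_ppc B P" and cardP: "card P = 5"
  and nomore: "\<not>(\<exists>Q. is_ppc B Q \<and> card Q = 6)"
begin

lemma blk: "b \<in> B \<Longrightarrow> b \<subseteq> {..<v} \<and> card b = 4"
  using pack unfolding packing_def by auto

lemma blkfin: "b \<in> B \<Longrightarrow> finite b"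
  using blk finite_subset by blast

lemma finB: "finite B"
proof -
  have "B \<subseteq> Pow {..<v}" using blk by auto
  then show ?thesis using finite_subset by blast
qed

lemma uniq:
  assumes "b \<in> B" "b' \<in> B" "x \<noteq> y" "x \<in> b" "y \<in> b" "x \<in> b'" "y \<in> b'"
  shows "b = b'"
proof -
  have xy: "x \<in> {..<v}" "y \<in> {..<v}" using assms blk by blast+
  have c: "card {c\<in>B. x \<in> c \<and> y \<in> c} \<le> 1"
    using pack xy assms(3) unfolding packing_def by blast
  have f: "finite {c\<in>B. x \<in> c \<and> y \<in> c}" using finB by auto
  show ?thesis using c card_le_Suc0_iff_eq[OF f] assms by auto
qed

lemma inter1:
  assumes "b \<in> B" "b' \<in> B" "b \<noteq> b'"
  shows "card (b \<inter> b') \<le> 1"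
proof -
  have f: "finite (b \<inter> b')" using blkfin assms by blast
  have "\<forall>a1\<in>b \<inter> b'. \<forall>a2\<in>b \<inter> b'. a1 = a2"
  proof (intro ballI)
    fix a1 a2 assume a: "a1 \<in> b \<inter> b'" "a2 \<in> b \<inter> b'"
    show "a1 = a2"
    proof (rule ccontr)
      assume "a1 \<noteq> a2"
      then have "b = b'" using uniq[OF assms(1,2)] a by blast
      then show False using assms(3) by simp
    qed
  qed
  then show ?thesis using card_le_Suc0_iff_eq[OF f] by simp
qed

lemma PsubB: "P \<subseteq> B" using ppc unfolding is_ppc_def by auto
lemma finP: "finite P" using PsubB finB finite_subset by blast
lemma Pdisj: "p \<in> P \<Longrightarrow> q \<in> P \<Longrightarrow> p \<noteq> q \<Longrightarrow> p \<inter> q = {}"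
  using ppc unfolding is_ppc_def by auto

lemma no6:
  assumes "is_ppc B Q"
  shows "card Q \<le> 5"
proof (rule ccontr)
  assume "\<not> card Q \<le> 5"
  then obtain Q' where "Q' \<subseteq> Q" "card Q' = 6"
    using obtain_subset_with_card_n[of 6 Q] by auto
  moreover have "is_ppc B Q'" using assms \<open>Q' \<subseteq> Q\<close> unfolding is_ppc_def by blast
  ultimately show False using nomore by blast
qed

definition "S = \<Union>P"
definition "T = {..<v} - S"

lemma finS: "finite S" unfolding S_def using finP blkfin PsubB by blast

lemma cardS: "card S = 20"
proof -
  have "card S = sum card P" unfolding S_def
    by (rule card_Union_disjoint) (use Pdisj blkfin PsubB in \<open>auto simp: pairwise_def disjnt_def\<close>)
  also have "\<dots> = sum (\<lambda>_. 4) P" using blk PsubB by (intro sum.cong) auto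
  finally show ?thesis using cardP by simp
qed

lemma Ssub: "S \<subseteq> {..<v}" unfolding S_def using blk PsubB by blast

lemma cardT: "card T = v - 20"
  unfolding T_def using card_Diff_subset[OF finS Ssub] cardS by simp

lemma finT: "finite T" unfolding T_def by simp

definition "pb x = (THE p. p \<in> P \<and> x \<in> p)"

lemma pb: assumes "x \<in> S" shows "pb x \<in> P" "x \<in> pb x" "\<And>p. p \<in> P \<Longrightarrow> x \<in> p \<Longrightarrow> p = pb x"
proof -
  obtain p where p: "p \<in> P" "x \<in> p" using assms unfolding S_def by blast
  have u: "q = p" if "q \<in> P" "x \<in> q" for q
  proof (rule ccontr)
    assume "q \<noteq> p"
    then have "q \<inter> p = {}" using Pdisj[OF that(1) p(1)] by simp
    then show False using that(2) p(2) by blast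
  qed
  have e: "pb x = p" unfolding pb_def
  proof (rule the_equality)
    show "p \<in> P \<and> x \<in> p" using p by simp
    show "\<And>q. q \<in> P \<and> x \<in> q \<Longrightarrow> q = p" using u by blast
  qed
  show "pb x \<in> P" using e p by simp
  show "x \<in> pb x" using e p by simp
  show "\<And>q. q \<in> P \<Longrightarrow> x \<in> q \<Longrightarrow> q = pb x" using e u by simp
qed

lemma Psub: "p \<in> P \<Longrightarrow> p \<subseteq> S" unfolding S_def by blast

definition "L x = {b\<in>B. b \<inter> S = {x}}"
definition "Cen = {x\<in>S. 13 \<le> card (L x)}"

lemma finL: "finite (L x)" unfolding L_def using finB by simp

lemma Lnot: assumes "l \<in> L x" shows "l \<notin> P"
proof
  assume "l \<in> P"
  then have "l \<inter> S = l" using Psub by blast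
  then have "card l = 1" using assms unfolding L_def by simp
  then show False using blk \<open>l \<in> P\<close> PsubB by fastforce
qed

lemma Ldisj: assumes "l \<in> L x" "p \<in> P" "x \<notin> p" shows "l \<inter> p = {}"
proof -
  have "l \<inter> S = {x}" using assms(1) unfolding L_def by auto
  then show ?thesis using assms(3) Psub[OF assms(2)] by (metis Int_iff disjoint_iff_not_equal singletonD subsetD)
qed

lemma Lsub: assumes "l \<in> L x" shows "l \<in> B" "x \<in> l" "card l = 4" "l \<subseteq> {..<v}" "\<And>y. y \<in> S \<Longrightarrow> y \<in> l \<Longrightarrow> y = x"
  using assms blk unfolding L_def by auto

lemma aug:
  assumes "Q \<subseteq> P" "D \<subseteq> B" "finite D" "\<forall>d\<in>D. \<forall>d'\<in>D. d \<noteq> d' \<longrightarrow> d \<inter> d' = {}"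
    "\<forall>d\<in>D. \<forall>p\<in>P-Q. d \<inter> p = {}" "card Q < card D"
  shows False
proof -
  have ne: "d \<noteq> {}" if "d \<in> B" for d using blk[OF that] by auto
  have dj: "(P - Q) \<inter> D = {}"
  proof (rule ccontr)
    assume "(P - Q) \<inter> D \<noteq> {}"
    then obtain d where "d \<in> D" "d \<in> P - Q" by blast
    then have "d \<inter> d = {}" using assms(5) by blast
    then show False using ne \<open>d \<in> D\<close> assms(2) by blast
  qed
  have pp: "is_ppc B ((P - Q) \<union> D)" unfolding is_ppc_def
  proof (intro conjI ballI impI)
    show "P - Q \<union> D \<subseteq> B" using PsubB assms(2) by blast
  next
    fix b c assume b: "b \<in> P - Q \<union> D" and c: "c \<in> P - Q \<union> D" and bc: "b \<noteq> c"
    show "b \<inter> c = {}"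
    proof (cases "b \<in> D")
      case True
      show ?thesis
      proof (cases "c \<in> D")
        case True
        then show ?thesis using assms(4) \<open>b \<in> D\<close> bc by blast
      next
        case False
        then have "c \<in> P - Q" using c by blast
        then show ?thesis using assms(5) \<open>b \<in> D\<close> by blast
      qed
    next
      case False
      then have bP: "b \<in> P - Q" using b by blast
      show ?thesis
      proof (cases "c \<in> D")
        case True
        then have "c \<inter> b = {}" using assms(5) bP by blast
        then show ?thesis by blast
      next
        case False
        then have "c \<in> P - Q" using c by blast
        then show ?thesis using Pdisj bP bc by blast
      qed
    qed
  qed
  have "card ((P - Q) \<union> D) = card (P - Q) + card D"
    using dj finP assms(3) by (simp add: card_Un_disjoint)
  moreover have "card (P - Q) = 5 - card Q"
    using card_Diff_subset[OF finite_subset[OF assms(1) finP] assms(1)] cardP by simp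
  moreover have "card Q \<le> 5" using card_mono[OF finP assms(1)] cardP by simp
  ultimately have "card ((P - Q) \<union> D) \<ge> 6" using assms(6) by linarith
  then show False using no6[OF pp] by linarith
qed

lemma hit:
  assumes "finite W" "x \<notin> W"
  shows "card {l\<in>L x. l \<inter> W \<noteq> {}} \<le> card W"
proof -
  define H where "H = {l\<in>L x. l \<inter> W \<noteq> {}}"
  define f where "f l = (SOME w. w \<in> l \<inter> W)" for l
  have fm: "f l \<in> l \<inter> W" if "l \<in> H" for l
  proof -
    have "\<exists>w. w \<in> l \<inter> W" using that unfolding H_def by blast
    then show ?thesis unfolding f_def by (rule someI_ex)
  qed
  have "inj_on f H"
  proof (rule inj_onI)
    fix l l' assume a: "l \<in> H" "l' \<in> H" "f l = f l'"
    have n: "x \<noteq> f l" using fm[OF a(1)] assms(2) by blast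
    have l1: "l \<in> L x" "l' \<in> L x" using a(1,2) unfolding H_def by auto
    have m: "f l \<in> l" "f l \<in> l'" using fm[OF a(1)] fm[OF a(2)] a(3) by auto
    show "l = l'" by (rule uniq[OF Lsub(1)[OF l1(1)] Lsub(1)[OF l1(2)] n Lsub(2)[OF l1(1)] m(1) Lsub(2)[OF l1(2)] m(2)])
  qed
  moreover have "f ` H \<subseteq> W" using fm by blast
  ultimately have "card H \<le> card W" by (rule card_inj_on_le[OF _ _ assms(1)])
  then show ?thesis unfolding H_def .
qed

lemma pick:
  assumes "c \<in> Cen" "finite W" "c \<notin> W" "card W < 13"
  shows "\<exists>l\<in>L c. l \<inter> W = {}"
proof (rule ccontr)
  assume "\<not> ?thesis"
  then have "L c \<subseteq> {l\<in>L c. l \<inter> W \<noteq> {}}" by blast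
  moreover have "finite {l\<in>L c. l \<inter> W \<noteq> {}}" using finL[of c] by simp
  ultimately have "card (L c) \<le> card {l\<in>L c. l \<inter> W \<noteq> {}}" using card_mono by blast
  then have "card (L c) \<le> card W" using hit[OF assms(2,3)] by linarith
  then show False using assms unfolding Cen_def by simp
qed

end


context pk begin

lemma sel:
  assumes "finite I" "I \<subseteq> Cen" "finite Z" "\<forall>c\<in>I. c \<notin> Z" "card Z + 4 * card I \<le> 16"
  shows "\<exists>l. (\<forall>c\<in>I. l c \<in> L c \<and> l c \<inter> Z = {}) \<and> (\<forall>c\<in>I. \<forall>c'\<in>I. c \<noteq> c' \<longrightarrow> l c \<inter> l c' = {})"
  using assms
proof (induction I rule: finite_induct)
  case empty
  then show ?case by auto
next
  case (insert i I)
  have ci: "card (insert i I) = card I + 1" using insert by simp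
  obtain l where l: "\<forall>c\<in>I. l c \<in> L c \<and> l c \<inter> Z = {}" "\<forall>c\<in>I. \<forall>c'\<in>I. c \<noteq> c' \<longrightarrow> l c \<inter> l c' = {}"
    using insert ci by auto
  define W where "W = Z \<union> (\<Union>c\<in>I. l c)"
  have finW: "finite W" unfolding W_def using insert(1) insert(5) l(1) Lsub blkfin by blast
  have "card (\<Union>c\<in>I. l c) \<le> (\<Sum>c\<in>I. card (l c))" by (rule card_UN_le[OF insert(1)])
  also have "\<dots> = (\<Sum>c\<in>I. 4)" using l(1) Lsub by (intro sum.cong) auto
  finally have "card (\<Union>c\<in>I. l c) \<le> 4 * card I" by simp
  then have cW: "card W < 13" unfolding W_def using card_Un_le[of Z "\<Union>c\<in>I. l c"] insert(7) ci by linarith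
  have iS: "i \<in> S" using insert Cen_def by auto
  have iW: "i \<notin> W"
  proof
    assume "i \<in> W"
    then show False
    proof (cases "i \<in> Z")
      case True then show ?thesis using insert by auto
    next
      case False
      then obtain c where "c \<in> I" "i \<in> l c" using \<open>i \<in> W\<close> W_def by auto
      then have "i = c" using Lsub(5)[of "l c" c i] l(1) iS by auto
      then show ?thesis using \<open>c \<in> I\<close> insert(2) by auto
    qed
  qed
  obtain li where li: "li \<in> L i" "li \<inter> W = {}" using pick[OF _ finW iW cW] insert by auto
  define l' where "l' = l(i := li)"
  have A: "\<forall>c\<in>insert i I. l' c \<in> L c \<and> l' c \<inter> Z = {}"
    using l li insert(2) unfolding l'_def W_def by auto
  have B: "\<forall>c\<in>insert i I. \<forall>c'\<in>insert i I. c \<noteq> c' \<longrightarrow> l' c \<inter> l' c' = {}"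
  proof (intro ballI impI)
    fix c c' assume c: "c \<in> insert i I" and c': "c' \<in> insert i I" and ne: "c \<noteq> c'"
    have sub: "l d \<subseteq> W" if "d \<in> I" for d unfolding W_def using that by blast
    show "l' c \<inter> l' c' = {}"
    proof (cases "c = i")
      case True
      then have "c' \<in> I" "c' \<noteq> i" using c' ne by auto
      then have "l' c' = l c'" "l' c = li" unfolding l'_def using True by auto
      then show ?thesis using li(2) sub[OF \<open>c' \<in> I\<close>] by blast
    next
      case False
      then have cI: "c \<in> I" using c by auto
      show ?thesis
      proof (cases "c' = i")
        case True
        then have "l' c = l c" "l' c' = li" unfolding l'_def using False by auto
        then show ?thesis using li(2) sub[OF cI] by blast
      next
        case False2: False
        then have "c' \<in> I" using c' by auto
        moreover have "l' c = l c" "l' c' = l c'" unfolding l'_def using False False2 by auto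
        ultimately show ?thesis using l(2) cI ne by auto
      qed
    qed
  qed
  show ?case using A B by blast
qed

lemma LCne: assumes "c \<in> Cen" shows "L c \<noteq> {}"
  using assms unfolding Cen_def by auto

lemma CenS: "Cen \<subseteq> S" unfolding Cen_def by auto

lemma lemA:
  assumes "c \<in> Cen" "c' \<in> Cen" "pb c = pb c'"
  shows "c = c'"
proof (rule ccontr)
  assume ne: "c \<noteq> c'"
  obtain l' where l': "l' \<in> L c'" using LCne[OF assms(2)] by auto
  have cS: "c \<in> S" "c' \<in> S" using assms CenS by auto
  have "c \<notin> l'" using Lsub(5)[OF l' cS(1)] ne by auto
  moreover have "card l' < 13" using Lsub(3)[OF l'] by simp
  ultimately obtain l where l: "l \<in> L c" "l \<inter> l' = {}"
    using pick[OF assms(1) blkfin[OF Lsub(1)[OF l']]] by auto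
  have "l \<noteq> l'" using l Lsub(2)[OF l(1)] by auto
  then have cD: "card {l, l'} = 2" by simp
  show False
  proof (rule aug[of "{pb c}" "{l, l'}"])
    show "{pb c} \<subseteq> P" using pb(1)[OF cS(1)] by simp
    show "{l, l'} \<subseteq> B" using l l' Lsub by auto
    show "finite {l, l'}" by simp
    show "\<forall>d\<in>{l, l'}. \<forall>d'\<in>{l, l'}. d \<noteq> d' \<longrightarrow> d \<inter> d' = {}" using l by auto
    show "\<forall>d\<in>{l, l'}. \<forall>p\<in>P - {pb c}. d \<inter> p = {}"
    proof (intro ballI)
      fix d p assume d: "d \<in> {l, l'}" and p: "p \<in> P - {pb c}"
      have "c \<notin> p" using pb(3)[OF cS(1)] p by auto
      moreover have "c' \<notin> p" using pb(3)[OF cS(2)] p assms(3) by auto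
      ultimately show "d \<inter> p = {}" using d p Ldisj l l' by auto
    qed
    show "card {pb c} < card {l, l'}" using cD by simp
  qed
qed

lemma lemB:
  assumes b: "b \<in> B" "b \<notin> P" "b \<inter> Cen = {}"
  shows "\<exists>p\<in>P. p \<inter> b \<noteq> {} \<and> p \<inter> Cen = {}"
proof (rule ccontr)
  assume na: "\<not> ?thesis"
  define Q where "Q = {p\<in>P. p \<inter> b \<noteq> {}}"
  define I where "I = {c\<in>Cen. pb c \<in> Q}"
  have QP: "Q \<subseteq> P" unfolding Q_def by auto
  have "I \<subseteq> S" unfolding I_def using CenS by auto
  then have finI: "finite I" using finite_subset finS by auto
  have injI: "inj_on pb I" using lemA unfolding I_def by (auto intro: inj_onI)
  have imI: "pb ` I = Q"
  proof
    show "pb ` I \<subseteq> Q" unfolding I_def by auto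
    show "Q \<subseteq> pb ` I"
    proof
      fix p assume p: "p \<in> Q"
      then obtain c where c: "c \<in> p" "c \<in> Cen" using na QP unfolding Q_def by blast
      then have "pb c = p" using pb(3) CenS p QP by blast
      then show "p \<in> pb ` I" using c p unfolding I_def by auto
    qed
  qed
  have cIQ: "card I = card Q" using card_image[OF injI] imI by simp
  have "Q = pb ` (b \<inter> S)"
  proof
    show "Q \<subseteq> pb ` (b \<inter> S)"
    proof
      fix p assume p: "p \<in> Q"
      then obtain x where x: "x \<in> p" "x \<in> b" using Q_def by auto
      have xS: "x \<in> S" using x p QP Psub by blast
      have "p = pb x" using pb(3)[OF xS] p QP x by blast
      then show "p \<in> pb ` (b \<inter> S)" using x xS by auto
    qed
    show "pb ` (b \<inter> S) \<subseteq> Q" unfolding Q_def using pb by blast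
  qed
  then have cQ: "card Q \<le> card (b \<inter> S)" using card_image_le blkfin[OF b(1)] by auto
  have bST: "card (b \<inter> S) + card (b \<inter> T) = 4"
  proof -
    have "b = (b \<inter> S) \<union> (b \<inter> T)" using blk[OF b(1)] unfolding T_def by auto
    then have "card b = card (b \<inter> S) + card (b \<inter> T)"
      by (metis Diff_disjoint T_def blkfin[OF b(1)] card_Un_disjoint finite_Int inf_left_commute inf_sup_aci(1) inf_bot_right)
    then show ?thesis using blk[OF b(1)] by simp
  qed
  have nz: "\<forall>c\<in>I. c \<notin> b \<inter> T" unfolding I_def T_def using CenS by auto
  have cz: "card (b \<inter> T) + 4 * card I \<le> 16" using bST cQ cIQ by linarith
  have IC: "I \<subseteq> Cen" unfolding I_def by auto
  have fz: "finite (b \<inter> T)" using finT by simp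
  obtain l where l: "\<forall>c\<in>I. l c \<in> L c \<and> l c \<inter> (b \<inter> T) = {}"
      "\<forall>c\<in>I. \<forall>c'\<in>I. c \<noteq> c' \<longrightarrow> l c \<inter> l c' = {}"
    using sel[OF finI IC fz nz cz] by blast
  have lc: "c \<in> l c" if "c \<in> I" for c using l(1) Lsub(2) that by blast
  have injl: "inj_on l I"
  proof (rule inj_onI)
    fix c c' assume "c \<in> I" "c' \<in> I" "l c = l c'"
    then show "c = c'" using l(2) lc by blast
  qed
  have bnot: "b \<notin> l ` I"
  proof
    assume "b \<in> l ` I"
    then obtain c where "c \<in> I" "b = l c" by auto
    then show False using lc b(3) unfolding I_def by blast
  qed
  have cD: "card (insert b (l ` I)) = card I + 1"
    using bnot card_image[OF injl] finI by simp
  have lbd: "l c \<inter> b = {}" if c: "c \<in> I" for c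
  proof -
    have cS: "c \<in> S" using c unfolding I_def using CenS by auto
    have "z \<notin> b" if z: "z \<in> l c" for z
    proof (cases "z \<in> S")
      case True
      then have "z = c" using Lsub(5) l(1) c z by blast
      then show ?thesis using c b(3) unfolding I_def by auto
    next
      case False
      then have "z \<in> T" using z Lsub(4) l(1) c unfolding T_def by blast
      then show ?thesis using l(1) c z by blast
    qed
    then show ?thesis by blast
  qed
  show False
  proof (rule aug[of Q "insert b (l ` I)"])
    show "Q \<subseteq> P" by (rule QP)
    show "insert b (l ` I) \<subseteq> B" using b(1) l(1) Lsub(1) by blast
    show "finite (insert b (l ` I))" using finI by simp
    show "\<forall>d\<in>insert b (l ` I). \<forall>d'\<in>insert b (l ` I). d \<noteq> d' \<longrightarrow> d \<inter> d' = {}"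
    proof (intro ballI impI)
      fix d d' assume d: "d \<in> insert b (l ` I)" and d': "d' \<in> insert b (l ` I)" and ne: "d \<noteq> d'"
      show "d \<inter> d' = {}"
      proof (cases "d = b")
        case True
        then obtain c' where "c' \<in> I" "d' = l c'" using d' ne by auto
        then show ?thesis using lbd[of c'] True by auto
      next
        case False
        then obtain c where c: "c \<in> I" "d = l c" using d by auto
        show ?thesis
        proof (cases "d' = b")
          case True
          then show ?thesis using lbd[OF c(1)] c(2) by auto
        next
          case False
          then obtain c' where c': "c' \<in> I" "d' = l c'" using d' by auto
          then have "c \<noteq> c'" using c ne by auto
          then show ?thesis using l(2) c c' by auto
        qed
      qed
    qed
    show "\<forall>d\<in>insert b (l ` I). \<forall>p\<in>P - Q. d \<inter> p = {}"
    proof (intro ballI)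
      fix d p assume d: "d \<in> insert b (l ` I)" and p: "p \<in> P - Q"
      show "d \<inter> p = {}"
      proof (cases "d = b")
        case True then show ?thesis using p unfolding Q_def by auto
      next
        case False
        then obtain c where c: "c \<in> I" "d = l c" using d by auto
        have cS: "c \<in> S" using c unfolding I_def using CenS by auto
        have "c \<notin> p" using pb(3)[OF cS] p c unfolding I_def by auto
        then show ?thesis using Ldisj l(1) c p by auto
      qed
    qed
    show "card Q < card (insert b (l ` I))" using cD cIQ by simp
  qed
qed

end


context pk begin

lemma finCen: "finite Cen" using finS CenS finite_subset by blast

lemma cardCen: "card Cen \<le> 5"
proof -
  have "inj_on pb Cen" using lemA by (auto intro: inj_onI)
  moreover have "pb ` Cen \<subseteq> P" using pb(1) CenS by auto
  ultimately have "card Cen \<le> card P" by (rule card_inj_on_le[OF _ _ finP])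
  then show ?thesis using cardP by simp
qed

definition "NR = {p\<in>P. p \<inter> Cen = {}}"

lemma cardNR: "card NR + card Cen = 5"
proof -
  have "P - NR = pb ` Cen"
  proof
    show "P - NR \<subseteq> pb ` Cen"
    proof
      fix p assume p: "p \<in> P - NR"
      then obtain c where c: "c \<in> p" "c \<in> Cen" unfolding NR_def by auto
      then have "p = pb c" using pb(3) CenS p by blast
      then show "p \<in> pb ` Cen" using c by auto
    qed
    show "pb ` Cen \<subseteq> P - NR" unfolding NR_def using pb(1,2) CenS by blast
  qed
  moreover have "inj_on pb Cen" using lemA by (auto intro: inj_onI)
  ultimately have "card (P - NR) = card Cen" by (simp add: card_image)
  moreover have "card (P - NR) = card P - card NR"
    by (rule card_Diff_subset) (use finP in \<open>auto simp: NR_def\<close>)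
  moreover have "card NR \<le> card P" using finP by (intro card_mono) (auto simp: NR_def)
  ultimately show ?thesis using cardP by linarith
qed

lemma bST: assumes b: "b \<in> B" shows "card (b \<inter> S) + card (b \<inter> T) = 4"
proof -
  have "b = (b \<inter> S) \<union> (b \<inter> T)" using blk[OF b] unfolding T_def by auto
  moreover have "(b \<inter> S) \<inter> (b \<inter> T) = {}" unfolding T_def by auto
  ultimately have "card b = card (b \<inter> S) + card (b \<inter> T)"
    by (metis blkfin[OF b] card_Un_disjoint finite_Int)
  then show ?thesis using blk[OF b] by simp
qed

definition "w b = card (b \<inter> Cen) * card (b \<inter> T)"

lemma sumW: "(\<Sum>b\<in>B-P. w b) \<le> card Cen * card T"
proof -
  let ?G = "SIGMA b:B-P. (b \<inter> Cen) \<times> (b \<inter> T)"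
  have "(\<Sum>b\<in>B-P. w b) = card ?G"
    unfolding w_def using finB blkfin by (subst card_SigmaI) (auto simp: card_cartesian_product)
  also have "card ?G \<le> card (Cen \<times> T)"
  proof (rule card_inj_on_le[where f=snd])
    show "inj_on snd ?G"
    proof (rule inj_onI)
      fix x y assume x: "x \<in> ?G" and y: "y \<in> ?G" and e: "snd x = snd y"
      obtain b c t where xx: "x = (b, c, t)" by (cases x) auto
      obtain b' c' t' where yy: "y = (b', c', t')" by (cases y) auto
      have "c \<noteq> t" using x xx CenS unfolding T_def by auto
      then have "b = b'" using uniq[of b b' c t] x y xx yy e by auto
      then show "x = y" using xx yy e by simp
    qed
    show "snd ` ?G \<subseteq> Cen \<times> T" by auto
    show "finite (Cen \<times> T)" using finCen finT by simp
  qed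
  finally show ?thesis by (simp add: card_cartesian_product)
qed

definition "C1 = {b\<in>B-P. b \<inter> Cen \<noteq> {}}"
definition "C0 = {b\<in>B-P. b \<inter> Cen = {}}"

lemma ebound:
  fixes m k t :: nat
  assumes "k + t = 4" "1 \<le> m" "m \<le> k"
  shows "3 - m * t \<le> m * (k - m) + (if m = 4 then 3 else 0)"
proof -
  have t: "t = 4 - k" using assms by simp
  have "k = 1 \<or> k = 2 \<or> k = 3 \<or> k = 4" using assms by linarith
  moreover have "m = 1 \<or> m = 2 \<or> m = 3 \<or> m = 4" using assms by linarith
  ultimately show ?thesis using assms(2,3) unfolding t by (elim disjE) simp_all
qed

lemma sumC1: "(\<Sum>b\<in>C1. 3 - w b) \<le> card Cen * (17 - card Cen) + 3"
proof -
  let ?F = "\<lambda>b. (b \<inter> Cen) \<times> (b \<inter> S - Cen)"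
  have finC1: "finite C1" unfolding C1_def using finB by simp
  have each: "3 - w b \<le> card (?F b) + (if b \<subseteq> Cen then 3 else 0)" if b: "b \<in> C1" for b
  proof -
    have bB: "b \<in> B" using b C1_def by auto
    have fb: "finite b" using blkfin bB by blast
    have m1: "1 \<le> card (b \<inter> Cen)" using b fb unfolding C1_def by (simp add: Suc_le_eq card_gt_0_iff)
    have mk: "card (b \<inter> Cen) \<le> card (b \<inter> S)" using fb CenS by (intro card_mono) auto
    have d: "card (b \<inter> S - Cen) = card (b \<inter> S) - card (b \<inter> Cen)"
    proof -
      have "b \<inter> S - Cen = b \<inter> S - (b \<inter> Cen)" by auto
      then show ?thesis using card_Diff_subset[of "b \<inter> Cen" "b \<inter> S"] fb CenS by auto
    qed
    have e4: "card (b \<inter> Cen) = 4 \<longleftrightarrow> b \<subseteq> Cen"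
    proof
      assume "card (b \<inter> Cen) = 4"
      then have "b \<inter> Cen = b" using card_subset_eq[of b "b \<inter> Cen"] fb blk bB by auto
      then show "b \<subseteq> Cen" by auto
    next
      assume "b \<subseteq> Cen" then have "b \<inter> Cen = b" by auto
      then show "card (b \<inter> Cen) = 4" using blk bB by auto
    qed
    have "3 - w b \<le> card (b \<inter> Cen) * (card (b \<inter> S) - card (b \<inter> Cen)) + (if card (b \<inter> Cen) = 4 then 3 else 0)"
      unfolding w_def by (rule ebound[OF bST[OF bB] m1 mk])
    then show ?thesis using d e4 by (simp add: card_cartesian_product)
  qed
  have "(\<Sum>b\<in>C1. 3 - w b) \<le> (\<Sum>b\<in>C1. card (?F b) + (if b \<subseteq> Cen then 3 else 0))"
    by (rule sum_mono) (rule each)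
  also have "\<dots> = (\<Sum>b\<in>C1. card (?F b)) + (\<Sum>b\<in>C1. (if b \<subseteq> Cen then 3 else 0))"
    by (rule sum.distrib)
  also have "(\<Sum>b\<in>C1. (if b \<subseteq> Cen then 3 else 0)) = 3 * card {b\<in>C1. b \<subseteq> Cen}"
    using sum.inter_filter[OF finC1, of "\<lambda>_. 3::nat" "\<lambda>b. b \<subseteq> Cen"] by simp
  also have "card {b\<in>C1. b \<subseteq> Cen} \<le> 1"
  proof -
    have all: "b = b'" if b: "b \<in> {b\<in>C1. b \<subseteq> Cen}" and b': "b' \<in> {b\<in>C1. b \<subseteq> Cen}" for b b'
    proof (rule ccontr)
      assume ne: "b \<noteq> b'"
      have bB: "b \<in> B" "b' \<in> B" using b b' C1_def by auto
      have "card (b \<inter> b') \<le> 1" using inter1[OF bB ne] .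
      moreover have "card (b \<union> b') \<le> 5"
      proof -
        have "b \<union> b' \<subseteq> Cen" using b b' by auto
        then show ?thesis using card_mono[OF finCen] cardCen le_trans by blast
      qed
      moreover have "card (b \<union> b') + card (b \<inter> b') = card b + card b'"
        using card_Un_Int[OF blkfin[OF bB(1)] blkfin[OF bB(2)]] by simp
      moreover have "card b = 4" "card b' = 4" using blk bB by auto
      ultimately show False by linarith
    qed
    have fin: "finite {b\<in>C1. b \<subseteq> Cen}" using finC1 by simp
    have "card {b\<in>C1. b \<subseteq> Cen} \<le> Suc 0" using card_le_Suc0_iff_eq[OF fin] all by blast
    then show ?thesis by simp
  qed
  also have "(\<Sum>b\<in>C1. card (?F b)) \<le> card Cen * (17 - card Cen)"
  proof -
    let ?G = "SIGMA b:C1. ?F b"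
    let ?H = "SIGMA c:Cen. (S - pb c) - Cen"
    have "(\<Sum>b\<in>C1. card (?F b)) = card ?G"
      using finC1 blkfin C1_def by (subst card_SigmaI) auto
    also have "\<dots> \<le> card ?H"
    proof (rule card_inj_on_le[where f=snd])
      show "inj_on snd ?G"
      proof (rule inj_onI)
        fix x y assume x: "x \<in> ?G" and y: "y \<in> ?G" and e: "snd x = snd y"
        obtain b c t where xx: "x = (b, c, t)" by (cases x) auto
        obtain b' c' t' where yy: "y = (b', c', t')" by (cases y) auto
        have "c \<noteq> t" using x xx by auto
        then have "b = b'" using uniq[of b b' c t] x y xx yy e C1_def by auto
        then show "x = y" using xx yy e by simp
      qed
      show "snd ` ?G \<subseteq> ?H"
      proof
        fix z assume "z \<in> snd ` ?G"
        then obtain b c y where b: "b \<in> C1" "c \<in> b \<inter> Cen" "y \<in> b \<inter> S - Cen" "z = (c, y)" by auto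
        have cS: "c \<in> S" using b CenS by auto
        have bB: "b \<in> B" "b \<notin> P" using b C1_def by auto
        have "y \<notin> pb c"
        proof
          assume yp: "y \<in> pb c"
          have "b \<noteq> pb c" using bB pb(1)[OF cS] by auto
          then have "card (b \<inter> pb c) \<le> 1" using inter1 bB pb(1)[OF cS] PsubB by auto
          moreover have "{c, y} \<subseteq> b \<inter> pb c" using b yp pb(2)[OF cS] by auto
          moreover have "c \<noteq> y" using b by auto
          ultimately show False using card_mono[of "b \<inter> pb c" "{c,y}"] blkfin bB by auto
        qed
        then show "z \<in> ?H" using b by auto
      qed
      show "finite ?H" using finCen finS by auto
    qed
    also have "card ?H = (\<Sum>c\<in>Cen. card ((S - pb c) - Cen))"
      using finCen finS by (subst card_SigmaI) auto
    also have "\<dots> = (\<Sum>c\<in>Cen. 17 - card Cen)"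
    proof (rule sum.cong)
      fix c assume c: "c \<in> Cen"
      have cS: "c \<in> S" using c CenS by auto
      have e: "(S - pb c) - Cen = (S - pb c) - (Cen - {c})" using pb(2)[OF cS] by auto
      have sub: "Cen - {c} \<subseteq> S - pb c"
      proof
        fix c' assume c': "c' \<in> Cen - {c}"
        have "c' \<notin> pb c"
        proof
          assume "c' \<in> pb c"
          then have "pb c = pb c'" using pb(3)[of c' "pb c"] pb(1)[OF cS] c' CenS by auto
          then show False using lemA c c' by auto
        qed
        then show "c' \<in> S - pb c" using c' CenS by auto
      qed
      have "card (S - pb c) = 16"
        using card_Diff_subset[of "pb c" S] Psub[OF pb(1)[OF cS]] cardS blk pb(1)[OF cS] PsubB blkfin by auto
      moreover have "card (Cen - {c}) = card Cen - 1" using c finCen by simp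
      moreover have "card ((S - pb c) - (Cen - {c})) = card (S - pb c) - card (Cen - {c})"
        by (rule card_Diff_subset[OF _ sub]) (use finCen in simp)
      moreover have "card Cen \<ge> 1" using c finCen card_gt_0_iff[of Cen] by fastforce
      ultimately show "card ((S - pb c) - Cen) = 17 - card Cen"
        unfolding e using cardCen by linarith
    qed simp
    also have "\<dots> = card Cen * (17 - card Cen)" by simp
    finally show ?thesis .
  qed
  finally show ?thesis by linarith
qed

end


context pk begin

lemma cardC0: "card C0 \<le> card NR * (112 - 4 * card Cen)"
proof -
  define Lp where "Lp p = (\<Union>x\<in>p. L x)" for p
  define Xp where "Xp p = {b\<in>B. \<exists>x\<in>p. \<exists>y\<in>S - p - Cen. x \<in> b \<and> y \<in> b}" for p
  have finNR: "finite NR" using finP NR_def by simp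
  have sub: "C0 \<subseteq> (\<Union>p\<in>NR. Lp p \<union> Xp p)"
  proof
    fix b assume b: "b \<in> C0"
    have bB: "b \<in> B" "b \<notin> P" "b \<inter> Cen = {}" using b C0_def by auto
    obtain p where p: "p \<in> P" "p \<inter> b \<noteq> {}" "p \<inter> Cen = {}" using lemB[OF bB] by auto
    obtain x where x: "x \<in> p" "x \<in> b" using p by auto
    have xS: "x \<in> S" using x p Psub by auto
    show "b \<in> (\<Union>p\<in>NR. Lp p \<union> Xp p)"
    proof (cases "b \<inter> S = {x}")
      case True
      then have "b \<in> Lp p" unfolding Lp_def L_def using bB x by auto
      then show ?thesis using p NR_def by auto
    next
      case False
      then obtain y where y: "y \<in> b" "y \<in> S" "y \<noteq> x" using x xS by auto
      have "y \<notin> p"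
      proof
        assume "y \<in> p"
        then have "{x, y} \<subseteq> b \<inter> p" using x y by auto
        moreover have "card (b \<inter> p) \<le> 1" using inter1[of b p] bB p PsubB by auto
        ultimately show False using card_mono[of "b \<inter> p" "{x,y}"] blkfin bB y by auto
      qed
      moreover have "y \<notin> Cen" using y bB by auto
      ultimately have "b \<in> Xp p" unfolding Xp_def using bB x y by auto
      then show ?thesis using p NR_def by auto
    qed
  qed
  have bnd: "card (Lp p \<union> Xp p) \<le> 112 - 4 * card Cen" if p: "p \<in> NR" for p
  proof -
    have pP: "p \<in> P" "p \<inter> Cen = {}" using p NR_def by auto
    have fp: "finite p" using blkfin pP PsubB by auto
    have cp: "card p = 4" using blk pP PsubB by auto
    have "card (Lp p) \<le> (\<Sum>x\<in>p. card (L x))" unfolding Lp_def by (rule card_UN_le[OF fp])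
    also have "\<dots> \<le> (\<Sum>x\<in>p. 12)"
    proof (rule sum_mono)
      fix x assume "x \<in> p"
      then have "x \<notin> Cen" "x \<in> S" using pP Psub by auto
      then show "card (L x) \<le> 12" unfolding Cen_def by auto
    qed
    finally have cL: "card (Lp p) \<le> 48" using cp by simp
    have "card (Xp p) \<le> card (p \<times> (S - p - Cen))"
    proof -
      define f where "f b = (SOME xy. xy \<in> p \<times> (S - p - Cen) \<and> fst xy \<in> b \<and> snd xy \<in> b)" for b
      have fm: "f b \<in> p \<times> (S - p - Cen) \<and> fst (f b) \<in> b \<and> snd (f b) \<in> b" if "b \<in> Xp p" for b
      proof -
        have "\<exists>x\<in>p. \<exists>y\<in>S - p - Cen. x \<in> b \<and> y \<in> b" using that unfolding Xp_def by simp
        then obtain x y where "x \<in> p" "y \<in> S - p - Cen" "x \<in> b" "y \<in> b" by blast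
        then have "\<exists>xy. xy \<in> p \<times> (S - p - Cen) \<and> fst xy \<in> b \<and> snd xy \<in> b" by (intro exI[of _ "(x,y)"]) auto
        then show ?thesis unfolding f_def by (rule someI_ex)
      qed
      have "inj_on f (Xp p)"
      proof (rule inj_onI)
        fix b b' assume b: "b \<in> Xp p" "b' \<in> Xp p" "f b = f b'"
        have "fst (f b) \<noteq> snd (f b)" using fm[OF b(1)] by auto
        then show "b = b'" using uniq[of b b' "fst (f b)" "snd (f b)"] fm[OF b(1)] fm[OF b(2)] b Xp_def by auto
      qed
      moreover have "f ` Xp p \<subseteq> p \<times> (S - p - Cen)"
      proof (rule image_subsetI)
        fix b assume "b \<in> Xp p"
        then show "f b \<in> p \<times> (S - p - Cen)" using fm by blast
      qed
      moreover have "finite (p \<times> (S - p - Cen))" using fp finS by auto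
      ultimately show ?thesis using card_inj_on_le by blast
    qed
    also have "card (p \<times> (S - p - Cen)) = 4 * (16 - card Cen)"
    proof -
      have "card (S - p) = 16" using card_Diff_subset[OF fp Psub[OF pP(1)]] cardS cp by simp
      moreover have "Cen \<subseteq> S - p" using CenS pP by auto
      ultimately have "card (S - p - Cen) = 16 - card Cen" using card_Diff_subset[OF finCen] by auto
      then show ?thesis using cp by (simp add: card_cartesian_product)
    qed
    finally have cX: "card (Xp p) \<le> 4 * (16 - card Cen)" .
    have "card (Lp p \<union> Xp p) \<le> card (Lp p) + card (Xp p)" by (rule card_Un_le)
    then show ?thesis using cL cX cardCen by linarith
  qed
  have "card C0 \<le> card (\<Union>p\<in>NR. Lp p \<union> Xp p)"
  proof (rule card_mono[OF _ sub])
    have "finite (Lp p \<union> Xp p)" for p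
    proof -
      have "Lp p \<union> Xp p \<subseteq> B" unfolding Lp_def Xp_def L_def by auto
      then show ?thesis using finB finite_subset by blast
    qed
    then show "finite (\<Union>p\<in>NR. Lp p \<union> Xp p)" using finNR by blast
  qed
  also have "\<dots> \<le> (\<Sum>p\<in>NR. card (Lp p \<union> Xp p))" by (rule card_UN_le[OF finNR])
  also have "\<dots> \<le> (\<Sum>p\<in>NR. 112 - 4 * card Cen)" by (rule sum_mono) (rule bnd)
  finally show ?thesis by simp
qed

lemma main_bound:
  assumes "v \<ge> 360"
  shows "3 * card B \<le> 5 * v - 15"
proof -
  have finBP: "finite (B - P)" using finB by simp
  have "3 * card (B - P) = (\<Sum>b\<in>B-P. 3)" by simp
  also have "\<dots> \<le> (\<Sum>b\<in>B-P. w b + (3 - w b))" by (rule sum_mono) simp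
  also have "\<dots> = (\<Sum>b\<in>B-P. w b) + (\<Sum>b\<in>B-P. 3 - w b)" by (rule sum.distrib)
  also have "(\<Sum>b\<in>B-P. 3 - w b) = (\<Sum>b\<in>C1. 3 - w b) + (\<Sum>b\<in>C0. 3 - w b)"
  proof -
    have "B - P = C1 \<union> C0" "C1 \<inter> C0 = {}" unfolding C1_def C0_def by auto
    moreover have "finite C1" by (rule finite_subset[OF _ finB]) (auto simp: C1_def)
    moreover have "finite C0" by (rule finite_subset[OF _ finB]) (auto simp: C0_def)
    ultimately show ?thesis by (simp add: sum.union_disjoint)
  qed
  also have "(\<Sum>b\<in>C0. 3 - w b) = 3 * card C0"
    unfolding w_def C0_def by simp
  finally have A: "3 * card (B - P) \<le> card Cen * card T + (card Cen * (17 - card Cen) + 3) + 3 * (card NR * (112 - 4 * card Cen))"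
    using sumW sumC1 cardC0 by linarith
  have cB: "card B = card (B - P) + 5" using card_Diff_subset[OF finP PsubB] cardP card_mono[OF finB PsubB] by simp
  have "card Cen \<le> 5" by (rule cardCen)
  then have "card Cen \<in> {0,1,2,3,4,5}" by auto
  then show ?thesis using A cB cardNR cardT assms by auto
qed

end



definition pt :: "nat \<Rightarrow> nat \<Rightarrow> nat" where "pt j a = 5 + 3 * a + j"

lemma pt_inj: "j < 3 \<Longrightarrow> j' < 3 \<Longrightarrow> pt j a = pt j' a' \<longleftrightarrow> j = j' \<and> a = a'"
  unfolding pt_def by presburger

lemma pt_ge: "pt j a \<ge> 5" unfolding pt_def by simp

lemma pt_ne[simp]: "x < 5 \<Longrightarrow> pt j a \<noteq> x" "x < 5 \<Longrightarrow> x \<noteq> pt j a" "\<not> pt j a < 5"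
  unfolding pt_def by auto

definition blk :: "nat \<Rightarrow> nat \<Rightarrow> nat \<Rightarrow> nat set" where
  "blk m i a = {i, pt 0 a, pt 1 ((a + i) mod m), pt 2 ((a + 2 * i) mod m)}"

lemma small0:
  fixes M d :: int
  assumes "M dvd d" "\<bar>d\<bar> < M"
  shows "d = 0"
proof (rule ccontr)
  assume "d \<noteq> 0"
  then have "\<bar>M\<bar> \<le> \<bar>d\<bar>" using dvd_imp_le_int[OF _ assms(1)] by simp
  then show False using assms(2) by linarith
qed

lemma modD: "(p::nat) mod m = q mod m \<Longrightarrow> int m dvd (int p - int q)"
  by (metis mod_eq_dvd_iff of_nat_mod)

lemma keyc1:
  fixes i i' a a' m :: nat
  shows "a < m \<Longrightarrow> a' < m \<Longrightarrow> (a + i) mod m = (a' + i) mod m \<Longrightarrow> a = a'"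
proof -
  assume h: "a < m" "a' < m" "(a + i) mod m = (a' + i) mod m"
  have "int m dvd (int a - int a')" using modD[OF h(3)] by simp
  then have "int a - int a' = 0" using small0 h by fastforce
  then show "a = a'" by simp
qed

lemma keyc2:
  fixes i a a' m :: nat
  shows "a < m \<Longrightarrow> a' < m \<Longrightarrow> (a + 2 * i) mod m = (a' + 2 * i) mod m \<Longrightarrow> a = a'"
  using keyc1[of a m a' "2*i"] by simp

lemma key01:
  fixes i i' a a' m :: nat
  shows "i < 5 \<Longrightarrow> i' < 5 \<Longrightarrow> 10 \<le> m \<Longrightarrow> (a + i) mod m = (a + i') mod m \<Longrightarrow> i = i'"
proof -
  assume h: "i < 5" "i' < 5" "10 \<le> m" "(a + i) mod m = (a + i') mod m"
  have "int m dvd (int i - int i')" using modD[OF h(4)] by simp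
  then have "int i - int i' = 0" using small0 h by fastforce
  then show "i = i'" by simp
qed

lemma key02:
  fixes i i' a a' m :: nat
  shows "i < 5 \<Longrightarrow> i' < 5 \<Longrightarrow> 10 \<le> m \<Longrightarrow> (a + 2 * i) mod m = (a + 2 * i') mod m \<Longrightarrow> i = i'"
proof -
  assume h: "i < 5" "i' < 5" "10 \<le> m" "(a + 2 * i) mod m = (a + 2 * i') mod m"
  have "int m dvd (2 * int i - 2 * int i')" using modD[OF h(4)] by simp
  then have "2 * int i - 2 * int i' = 0" using small0 h by fastforce
  then show "i = i'" by simp
qed

lemma key12:
  fixes i i' a a' m :: nat
  shows "i < 5 \<Longrightarrow> i' < 5 \<Longrightarrow> 10 \<le> m \<Longrightarrow> (a + i) mod m = (a' + i') mod m
   \<Longrightarrow> (a + 2 * i) mod m = (a' + 2 * i') mod m \<Longrightarrow> i = i'"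
proof -
  assume h: "i < 5" "i' < 5" "10 \<le> m" "(a + i) mod m = (a' + i') mod m" "(a + 2 * i) mod m = (a' + 2 * i') mod m"
  have d1: "int m dvd (int a + int i - int a' - int i')" using modD[OF h(4)] by (simp add: algebra_simps)
  have d2: "int m dvd (int a + 2 * int i - int a' - 2 * int i')" using modD[OF h(5)] by (simp add: algebra_simps)
  have "int m dvd ((int a + 2 * int i - int a' - 2 * int i') - (int a + int i - int a' - int i'))"
    using dvd_diff[OF d2 d1] .
  then have "int m dvd (int i - int i')" by (simp add: algebra_simps)
  then have "int i - int i' = 0" using small0 h by fastforce
  then show "i = i'" by simp
qed

lemma slot:
  assumes "x \<in> blk m i a" "x \<in> blk m i' a'" "i < 5" "i' < 5"
  shows "(x = i \<and> i = i') \<or> (x = pt 0 a \<and> a = a') \<or>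
         (x = pt 1 ((a + i) mod m) \<and> (a + i) mod m = (a' + i') mod m) \<or>
         (x = pt 2 ((a + 2 * i) mod m) \<and> (a + 2 * i) mod m = (a' + 2 * i') mod m)"
  using assms
  unfolding blk_def by (auto simp: pt_inj)

lemma blk_pair:
  assumes "i < 5" "i' < 5" "a < m" "a' < m" "10 \<le> m" "x \<noteq> y"
    "x \<in> blk m i a" "y \<in> blk m i a" "x \<in> blk m i' a'" "y \<in> blk m i' a'"
  shows "i = i' \<and> a = a'"
proof -
  have sx: "(x = i \<and> i = i') \<or> (x = pt 0 a \<and> a = a') \<or>
         (x = pt 1 ((a + i) mod m) \<and> (a + i) mod m = (a' + i') mod m) \<or>
         (x = pt 2 ((a + 2 * i) mod m) \<and> (a + 2 * i) mod m = (a' + 2 * i') mod m)"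
    using slot assms by blast
  have sy: "(y = i \<and> i = i') \<or> (y = pt 0 a \<and> a = a') \<or>
         (y = pt 1 ((a + i) mod m) \<and> (a + i) mod m = (a' + i') mod m) \<or>
         (y = pt 2 ((a + 2 * i) mod m) \<and> (a + 2 * i) mod m = (a' + 2 * i') mod m)"
    using slot assms by blast
  show ?thesis
    using sx sy assms(6) keyc1[OF assms(3,4), of i] keyc2[OF assms(3,4), of i]
      key01[OF assms(1,2,5), of a] key02[OF assms(1,2,5), of a] key12[OF assms(1,2,5), of a a']
    by auto
qed

lemma blk_center: "i < 5 \<Longrightarrow> x \<in> blk m i a \<Longrightarrow> x < 5 \<Longrightarrow> x = i"
  unfolding blk_def by auto

lemma blk_card: "i < 5 \<Longrightarrow> card (blk m i a) = 4"
  unfolding blk_def by (simp add: pt_inj)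

lemma blk_sub: "i < 5 \<Longrightarrow> a < m \<Longrightarrow> 5 + 3 * m \<le> v \<Longrightarrow> 0 < m \<Longrightarrow> blk m i a \<subseteq> {..<v}"
proof -
  assume h: "i < 5" "a < m" "5 + 3 * m \<le> v" "0 < m"
  have "(a + i) mod m < m" "(a + 2 * i) mod m < m" using h by auto
  then have "6 + 3 * ((a + i) mod m) < v" "7 + 3 * ((a + 2 * i) mod m) < v" "5 + 3 * a < v" using h by linarith+
  then show ?thesis using h unfolding blk_def pt_def by auto
qed



lemma construction:
  assumes v: "v \<ge> 360"
  shows "\<exists>B. packing v 4 {..<v} B \<and> max_ppc_size B 5 \<and> card B = 5 * ((v - 5) div 3) + 1"
proof -
  define m where "m = (v - 5) div 3"
  have m15: "15 \<le> m" using v unfolding m_def by auto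
  have m10: "10 \<le> m" and mv: "5 + 3 * m \<le> v" using v unfolding m_def by auto
  define E :: "nat set" where "E = {0,1,2,3}"
  define Bc where "Bc = insert E ((\<lambda>(i,a). blk m i a) ` ({..<5} \<times> {..<m}))"
  have memB: "b \<in> Bc \<longleftrightarrow> b = E \<or> (\<exists>i<5. \<exists>a<m. b = blk m i a)" for b
    unfolding Bc_def by auto
  have finBc: "finite Bc" unfolding Bc_def by simp
  have cent: "\<exists>x\<in>b. x < 5" if "b \<in> Bc" for b
    using that unfolding memB E_def blk_def by auto
  have Enot: "E \<noteq> blk m i a" if "i < 5" for i a
  proof
    assume "E = blk m i a"
    then have "0 \<in> blk m i a" "1 \<in> blk m i a" unfolding E_def by auto
    then have "0 = i" "1 = i" using blk_center[OF that] by auto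
    then show False by simp
  qed
  have injb: "inj_on (\<lambda>(i,a). blk m i a) ({..<5} \<times> {..<m})"
  proof (rule inj_onI)
    fix x y assume x: "x \<in> {..<5} \<times> {..<m}" and y: "y \<in> {..<5} \<times> {..<m}"
      and e: "(\<lambda>(i,a). blk m i a) x = (\<lambda>(i,a). blk m i a) y"
    obtain i a where xx: "x = (i,a)" by (cases x)
    obtain i' a' where yy: "y = (i',a')" by (cases y)
    have b: "blk m i a = blk m i' a'" using e xx yy by simp
    have in1: "i \<in> blk m i a" "pt 0 a \<in> blk m i a" unfolding blk_def by auto
    have "i \<noteq> pt 0 a" using x xx by simp
    then have "i = i' \<and> a = a'" using blk_pair[of i i' a m a' i "pt 0 a"] x y xx yy m10 in1 b by auto
    then show "x = y" using xx yy by simp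
  qed
  have cardB: "card Bc = 5 * m + 1"
  proof -
    have "E \<notin> (\<lambda>(i,a). blk m i a) ` ({..<5} \<times> {..<m})" using Enot by auto
    then have "card Bc = card ((\<lambda>(i,a). blk m i a) ` ({..<5} \<times> {..<m})) + 1"
      unfolding Bc_def by simp
    also have "\<dots> = 5 * m + 1" using card_image[OF injb] by (simp add: card_cartesian_product)
    finally show ?thesis .
  qed
  have uq: "b = b'" if b: "b \<in> Bc" "b' \<in> Bc" and xy: "x \<noteq> y" "x \<in> b" "y \<in> b" "x \<in> b'" "y \<in> b'" for b b' x y
  proof -
    have EE: "False" if "i < 5" "x \<in> blk m i a" "y \<in> blk m i a" "x \<in> E" "y \<in> E" for i a
      using that blk_center[of i x m a] blk_center[of i y m a] xy(1) unfolding E_def by auto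
    show ?thesis
      using b xy unfolding memB
    proof (elim disjE exE conjE)
      show "b = E \<Longrightarrow> b' = E \<Longrightarrow> b = b'" by simp
    next
      fix i a assume "b = E" "i < 5" "a < m" "b' = blk m i a"
      then show "b = b'" using EE xy by blast
    next
      fix i a assume "b' = E" "i < 5" "a < m" "b = blk m i a"
      then show "b = b'" using EE xy by blast
    next
      fix i a i' a' assume h: "i < 5" "a < m" "b = blk m i a" "i' < 5" "a' < m" "b' = blk m i' a'"
      then show "b = b'" using blk_pair[of i i' a m a' x y] m10 xy by auto
    qed
  qed
  have pack: "packing v 4 {..<v} Bc"
    unfolding packing_def
  proof (intro conjI ballI impI)
    show "finite {..<v}" "card {..<v} = v" by auto
  next
    fix b assume "b \<in> Bc"
    then show "b \<subseteq> {..<v}" "card b = 4"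
      using blk_sub[OF _ _ mv] blk_card m10 v unfolding memB E_def by auto
  next
    fix x y assume "x \<in> {..<v}" "y \<in> {..<v}" "x \<noteq> y"
    have fin: "finite {b \<in> Bc. x \<in> b \<and> y \<in> b}" using finBc by simp
    have all: "\<forall>a1\<in>{b \<in> Bc. x \<in> b \<and> y \<in> b}. \<forall>a2\<in>{b \<in> Bc. x \<in> b \<and> y \<in> b}. a1 = a2"
    proof (intro ballI)
      fix a1 a2 assume "a1 \<in> {b \<in> Bc. x \<in> b \<and> y \<in> b}" "a2 \<in> {b \<in> Bc. x \<in> b \<and> y \<in> b}"
      then show "a1 = a2" using uq[of a1 a2 x y] \<open>x \<noteq> y\<close> by simp
    qed
    have "card {b \<in> Bc. x \<in> b \<and> y \<in> b} \<le> Suc 0" using card_le_Suc0_iff_eq[OF fin] all by blast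
    then show "card {b \<in> Bc. x \<in> b \<and> y \<in> b} \<le> 1" by simp
  qed
  have le5: "card Q \<le> 5" if "is_ppc Bc Q" for Q
  proof -
    define f :: "nat set \<Rightarrow> nat" where "f b = (SOME x. x \<in> b \<and> x < 5)" for b
    have fm: "f b \<in> b \<and> f b < 5" if "b \<in> Q" for b
    proof -
      have "b \<in> Bc" using that \<open>is_ppc Bc Q\<close> unfolding is_ppc_def by blast
      then have "\<exists>x. x \<in> b \<and> x < 5" using cent by blast
      then show ?thesis unfolding f_def by (rule someI_ex)
    qed
    have "inj_on f Q"
    proof (rule inj_onI)
      fix b b' assume bb: "b \<in> Q" "b' \<in> Q" "f b = f b'"
      show "b = b'"
      proof (rule ccontr)
        assume "b \<noteq> b'"
        then have "b \<inter> b' = {}" using bb(1,2) \<open>is_ppc Bc Q\<close> unfolding is_ppc_def by simp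
        moreover have "f b \<in> b \<inter> b'" using fm[OF bb(1)] fm[OF bb(2)] bb(3) by simp
        ultimately show False by simp
      qed
    qed
    moreover have "f ` Q \<subseteq> {..<5}" using fm by auto
    ultimately have "card Q \<le> card {..<(5::nat)}" by (rule card_inj_on_le[OF _ _ finite_lessThan])
    then show ?thesis by simp
  qed
  have ex5: "is_ppc Bc ((\<lambda>i. blk m i i) ` {..<5})" "card ((\<lambda>i. blk m i i) ` {..<5}) = 5"
  proof -
    have e: "blk m i i = {i, pt 0 i, pt 1 (2 * i), pt 2 (3 * i)}" if "i < 5" for i
    proof -
      have "i + i < m" "i + 2 * i < m" using that m15 by linarith+
      then have "(i + i) mod m = 2 * i" "(i + 2 * i) mod m = 3 * i" by simp_all
      then show ?thesis unfolding blk_def by simp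
    qed
    have dj: "blk m i i \<inter> blk m j j = {}" if "i < 5" "j < 5" "i \<noteq> j" for i j
      using that unfolding e[OF that(1)] e[OF that(2)] by (auto simp: pt_inj)
    show "is_ppc Bc ((\<lambda>i. blk m i i) ` {..<5})"
      unfolding is_ppc_def memB using dj m10 by (auto simp: Bc_def)
    have "inj_on (\<lambda>i. blk m i i) {..<5}"
    proof (rule inj_onI)
      fix i j assume "i \<in> {..<(5::nat)}" "j \<in> {..<(5::nat)}" "blk m i i = blk m j j"
      then show "i = j" using dj[of i j] unfolding blk_def by auto
    qed
    then show "card ((\<lambda>i. blk m i i) ` {..<5}) = 5" by (simp add: card_image)
  qed
  have "max_ppc_size Bc 5"
    unfolding max_ppc_size_def using ex5 le5 by fastforce
  then show ?thesis using pack cardB m_def by blast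
qed

theorem theorem4p5:
  fixes v :: nat
  assumes "v \<ge> 360"
  shows "int (beta 5 v 4) \<le> (5 * int v - 15) div 3
    \<and> (v mod 3 = 0 \<longrightarrow> 3 * int (beta 5 v 4) \<ge> 5 * int v - 27)
    \<and> (v mod 3 = 1 \<longrightarrow> 3 * int (beta 5 v 4) \<ge> 5 * int v - 32)
    \<and> (v mod 3 = 2 \<longrightarrow> 3 * int (beta 5 v 4) \<ge> 5 * int v - 22)"
proof -
  define SS where "SS = {card B | B. packing v 4 {..<v} (B :: nat set set) \<and> max_ppc_size B 5}"
  have be: "beta 5 v 4 = Max SS" unfolding beta_def SS_def by simp
  have fin: "finite SS"
  proof -
    have "SS \<subseteq> {..2 ^ v}"
    proof
      fix n assume "n \<in> SS"
      then obtain B :: "nat set set" where B: "n = card B" "packing v 4 {..<v} B" unfolding SS_def by auto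
      have "B \<subseteq> Pow {..<v}" using B(2) unfolding packing_def by auto
      then have "card B \<le> card (Pow {..<(v::nat)})" by (intro card_mono) auto
      then show "n \<in> {..2 ^ v}" using B(1) by (simp add: card_Pow)
    qed
    then show ?thesis using finite_subset by blast
  qed
  obtain Bc :: "nat set set" where Bc: "packing v 4 {..<v} Bc" "max_ppc_size Bc 5" "card Bc = 5 * ((v - 5) div 3) + 1"
    using construction[OF assms] by blast
  have inS: "card Bc \<in> SS" unfolding SS_def using Bc by blast
  have lo: "beta 5 v 4 \<ge> 5 * ((v - 5) div 3) + 1" using Max_ge[OF fin inS] Bc(3) be by simp
  have "Max SS \<in> SS" using Max_in[OF fin] inS by blast
  then obtain B :: "nat set set" where B: "beta 5 v 4 = card B" "packing v 4 {..<v} B" "max_ppc_size B 5"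
    unfolding SS_def be by auto
  obtain P where P: "is_ppc B P" "card P = 5" using B(3) unfolding max_ppc_size_def by auto
  have n6: "\<not>(\<exists>Q. is_ppc B Q \<and> card Q = 6)" using B(3) unfolding max_ppc_size_def by simp
  interpret pk v B P using B(2) P n6 by unfold_locales auto
  have up: "3 * beta 5 v 4 \<le> 5 * v - 15" using main_bound[OF assms] B(1) by simp
  then have "3 * int (beta 5 v 4) \<le> 5 * int v - 15" using assms by linarith
  then have u: "int (beta 5 v 4) \<le> (5 * int v - 15) div 3" by linarith
  have l0: "int (5 * ((v - 5) div 3) + 1) \<le> int (beta 5 v 4)" using lo by (simp only: of_nat_le_iff)
  have l1: "int (5 * ((v - 5) div 3) + 1) = 5 * int ((v - 5) div 3) + 1" by simp
  define X where "X = int ((v - 5) div 3)"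
  define Y where "Y = int (beta 5 v 4)"
  have l2: "5 * X + 1 \<le> Y" using l0 l1 unfolding X_def Y_def by simp
  have c: "v mod 3 = 0 \<longrightarrow> 3 * (5 * X + 1) \<ge> 5 * int v - 27"
     "v mod 3 = 1 \<longrightarrow> 3 * (5 * X + 1) \<ge> 5 * int v - 32"
     "v mod 3 = 2 \<longrightarrow> 3 * (5 * X + 1) \<ge> 5 * int v - 22"
    unfolding X_def using assms by presburger+
  have h: "3 * (5 * X + 1) \<le> 3 * Y" using l2 by simp
  have r0: "v mod 3 = 0 \<longrightarrow> 3 * Y \<ge> 5 * int v - 27"
  proof
    assume a0: "v mod 3 = 0"
    have "5 * int v - 27 \<le> 3 * (5 * X + 1)" by (rule mp[OF c(1) a0])
    then show "3 * Y \<ge> 5 * int v - 27" using h by linarith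
  qed
  have r1: "v mod 3 = 1 \<longrightarrow> 3 * Y \<ge> 5 * int v - 32"
  proof
    assume a1: "v mod 3 = 1"
    have "5 * int v - 32 \<le> 3 * (5 * X + 1)" by (rule mp[OF c(2) a1])
    then show "3 * Y \<ge> 5 * int v - 32" using h by linarith
  qed
  have r2: "v mod 3 = 2 \<longrightarrow> 3 * Y \<ge> 5 * int v - 22"
  proof
    assume a2: "v mod 3 = 2"
    have "5 * int v - 22 \<le> 3 * (5 * X + 1)" by (rule mp[OF c(3) a2])
    then show "3 * Y \<ge> 5 * int v - 22" using h by linarith
  qed
  show ?thesis using u r0 r1 r2 unfolding Y_def by blast
qed

end
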